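(* Let $V$ be any $\mathcal{U}(\widehat{\mathfrak{sl}}_2)$-module of the form $D^{k,t}_0$ or $D^{\pm,k,t}_j$ (with $k\in\mathbb{Z}$, $k<-2$, $j\in-\tfrac12\mathbb{N}$, $t\in\mathbb{Z}$), so that the contragredient is defined for $V$ and for its spectral-flow images. Then for every $s\in\mathbb{Z}$ one has the equality of $\mathcal{U}(\widehat{\mathfrak{sl}}_2)$-modules $(V^s)^\curlyvee=(V^\curlyvee)^{-s}$ (same underlying vector space, same action).
   Context: $\widehat{\mathfrak{sl}}_2$ has generators $J^a_n$ ($a\in\{+,-,0\}$, $n\in\mathbb{Z}$), $K$, $d$ with $[J^+_m,J^-_n]=J^0_{m+n}+Km\delta_{m+n,0}$, $[J^0_m,J^\pm_n]=\pm2J^\pm_{m+n}$, $[J^0_m,J^0_n]=2Km\delta_{m+n,0}$, $[J^\pm_m,J^\pm_n]=0$, $[d,J^a_n]=nJ^a_n$, $K$ central. For $j\in-\tfrac12\mathbb{N}$, $D^\pm_j$ are the $\mathfrak{sl}_2=\mathrm{span}\{J^a_0\}$-modules with bases $\{|j,m\rangle_\pm\}_{m\ge0}$, $J^0|j,m\rangle_\pm=\pm2(m-j)|j,m\rangle_\pm$, $J^\pm|j,m\rangle_\pm=\sqrt{(m+1)(m-2j)}|j,m+1\rangle_\pm$, $J^\mp|j,m\rangle_\pm=-\sqrt{m(m-1-2j)}|j,m-1\rangle_\pm$, and $D_0=\mathbb{C}$ is trivial. With $\mathfrak{r}_+=\mathrm{span}\{J^a_n:n\ge1\}$, $\mathfrak{k}=\mathrm{span}\{J^a_0,K,d\}$,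 the prolongation at level $k$ is $V^k=\mathcal{U}(\widehat{\mathfrak{sl}}_2)\otimes_{\mathcal{U}(\mathfrak{k}\oplus\mathfrak{r}_+)}V^{(k)}$, with $K=k$, $\mathfrak{r}_+=0$ and $d$ acting by $-\frac{j(j+1)}{k+2}$ (resp. $0$ for $D_0$) on $V^{(k)}=V$. The spectral flow automorphism $\vartheta_s$ is $J^\pm_n\mapsto J^\pm_{n\mp s}$, $J^0_n\mapsto J^0_n-sK\delta_{n,0}$, $K\mapsto K$, $d\mapsto d+\frac s2J^0_0-\frac{s^2}4K$, and $W^s=(W,\rho\circ\vartheta_s)$ for a module $(W,\rho)$. $D^{\pm,k,t}_j=((D^\pm_j)^k)^t$, $D^{k,t}_0=((D_0)^k)^t$. For such a module $V$, with distinguished cyclic vector $v_0=1\otimes|j,0\rangle_\pm$ (resp. $1\otimes1$) having $d$- and $J^0_0$-eigenvalues $\delta_0,q_0$, put $V_{m,n}=\{v:dv=(\delta_0-m)v,\ J^0_0v=(q_0+2n)v\}$; the contragredient is $V^\curlyvee=\bigoplus_{m,n}V_{m,n}^*$ with $(J^a_n\varphi)(v)=-\varphi(J^a_{-n}v)$, $(K\varphi)(v)=\varphi(Kv)$, $(d\varphi)(v)=\varphi(dv)$. (The subspaces $V_{m,n}$ of $V$ and of $V^s$ coincide as subspaces of the common underlying vector space.) *)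

theory Defs
  imports Complex_Main
begin

text \<open>Index a of J^a_n: Pl = +, Mi = -, Ze = 0.\<close>
datatype sgn = Pl | Mi | Ze

text \<open>Basis of the affine algebra: J^a_n, the central element K, and d.\<close>
datatype gen = J sgn int | Kc | Dc

fun brk :: "gen \<Rightarrow> gen \<Rightarrow> (complex \<times> gen) list" where
  "brk (J Pl m) (J Mi n) = [(1, J Ze (m+n))] @ (if m+n = 0 then [(of_int m, Kc)] else [])"
| "brk (J Mi n) (J Pl m) = [(-1, J Ze (m+n))] @ (if m+n = 0 then [(- of_int m, Kc)] else [])"
| "brk (J Ze m) (J Pl n) = [(2, J Pl (m+n))]"
| "brk (J Ze m) (J Mi n) = [(-2, J Mi (m+n))]"
| "brk (J Pl n) (J Ze m) = [(-2, J Pl (m+n))]"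
| "brk (J Mi n) (J Ze m) = [(2, J Mi (m+n))]"
| "brk (J Ze m) (J Ze n) = (if m+n = 0 then [(2 * of_int m, Kc)] else [])"
| "brk Dc (J a n) = [(of_int n, J a n)]"
| "brk (J a n) Dc = [(- of_int n, J a n)]"
| "brk _ _ = []"

record 'v umod =
  car  :: "'v set"
  addv :: "'v \<Rightarrow> 'v \<Rightarrow> 'v"
  scal :: "complex \<Rightarrow> 'v \<Rightarrow> 'v"
  act  :: "gen \<Rightarrow> 'v \<Rightarrow> 'v"

definition mod_eq :: "'v umod \<Rightarrow> 'v umod \<Rightarrow> bool" where
  "mod_eq A B \<longleftrightarrow> car A = car B
     \<and> (\<forall>x\<in>car A. \<forall>y\<in>car A. addv A x y = addv B x y)
     \<and> (\<forall>c. \<forall>x\<in>car A. scal A c x = scal B c x)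
     \<and> (\<forall>g. \<forall>x\<in>car A. act A g x = act B g x)"

text \<open>Free vector space on pairs (word in the generators, basis vector of V); words act by
  left concatenation, so the word [x1,...,xr] stands for x1 \<cdots> xr \<otimes> b.\<close>
type_synonym 'b fv = "gen list \<times> 'b \<Rightarrow> complex"

definition FV :: "'b fv set" where
  "FV = {f. finite {p. f p \<noteq> 0}}"

definition ev :: "gen list \<Rightarrow> 'b \<Rightarrow> 'b fv" where
  "ev w b = (\<lambda>p. if p = (w, b) then 1 else 0)"

definition lincomb :: "(complex \<times> 'c) list \<Rightarrow> ('c \<Rightarrow> 'b fv) \<Rightarrow> 'b fv" where
  "lincomb L f = (\<lambda>p. sum_list (map (\<lambda>(c, z). c * f z p) L))"

text \<open>Generating relations: Lie relations of U(g) (inside words), and the right action of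
  the parabolic k + r_+ : J^a_0 acts on V by the sl2-action act0, K by k, d by delta, r_+ by 0.\<close>
definition rels :: "(sgn \<Rightarrow> 'b \<Rightarrow> (complex \<times> 'b) list) \<Rightarrow> complex \<Rightarrow> int \<Rightarrow> 'b fv set" where
  "rels act0 \<delta> k =
     {(\<lambda>p. ev (w @ [x, y] @ w') b p - ev (w @ [y, x] @ w') b p
            - lincomb (brk x y) (\<lambda>z. ev (w @ [z] @ w') b) p) | w x y w' b. True}
   \<union> {(\<lambda>p. ev (w @ [J a 0]) b p - lincomb (act0 a b) (\<lambda>b'. ev w b') p) | w a b. True}
   \<union> {(\<lambda>p. ev (w @ [Kc]) b p - of_int k * ev w b p) | w b. True}
   \<union> {(\<lambda>p. ev (w @ [Dc]) b p - \<delta> * ev w b p) | w b. True}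
   \<union> {ev (w @ [J a n]) b | w a n b. n \<ge> 1}"

inductive_set spanR :: "'b fv set \<Rightarrow> 'b fv set" for R where
  zero: "(\<lambda>p. 0) \<in> spanR R"
| step: "r \<in> R \<Longrightarrow> n \<in> spanR R \<Longrightarrow> (\<lambda>p. c * r p + n p) \<in> spanR R"

definition qcls :: "'b fv set \<Rightarrow> 'b fv \<Rightarrow> 'b fv set" where
  "qcls N f = {g \<in> FV. (\<lambda>p. f p - g p) \<in> N}"

definition rep :: "'b fv set \<Rightarrow> 'b fv" where
  "rep C = (SOME f. f \<in> C)"

text \<open>Left multiplication by a generator.\<close>
definition prep :: "gen \<Rightarrow> 'b fv \<Rightarrow> 'b fv" where
  "prep x f = (\<lambda>(w, b). case w of [] \<Rightarrow> 0 | y # w' \<Rightarrow> if y = x then f (w', b) else 0)"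

text \<open>The prolongation U(g) \<otimes>_{U(k + r_+)} V at level k, where d acts on V by delta.\<close>
definition indmod :: "(sgn \<Rightarrow> 'b \<Rightarrow> (complex \<times> 'b) list) \<Rightarrow> complex \<Rightarrow> int \<Rightarrow> 'b fv set umod" where
  "indmod act0 \<delta> k =
    (let N = spanR (rels act0 \<delta> k) in
     \<lparr> car = {qcls N f | f. f \<in> FV},
       addv = (\<lambda>C D. qcls N (\<lambda>p. rep C p + rep D p)),
       scal = (\<lambda>c C. qcls N (\<lambda>p. c * rep C p)),
       act = (\<lambda>x C. qcls N (prep x (rep C))) \<rparr>)"

definition flow :: "int \<Rightarrow> 'v umod \<Rightarrow> 'v umod" where
  "flow s W = W\<lparr> act := (\<lambda>x v. case x of
       J Pl n \<Rightarrow> act W (J Pl (n - s)) v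
     | J Mi n \<Rightarrow> act W (J Mi (n + s)) v
     | J Ze n \<Rightarrow> (if n = 0 then addv W (act W (J Ze 0) v) (scal W (- of_int s) (act W Kc v))
                  else act W (J Ze n) v)
     | Kc \<Rightarrow> act W Kc v
     | Dc \<Rightarrow> addv W (act W Dc v)
               (addv W (scal W (of_int s / 2) (act W (J Ze 0) v))
                       (scal W (- ((of_int s)^2) / 4) (act W Kc v)))) \<rparr>"

text \<open>V_{m,n} for a module with distinguished-vector eigenvalues par = (delta0, q0).\<close>
definition wsp :: "'v umod \<Rightarrow> complex \<times> complex \<Rightarrow> int \<Rightarrow> int \<Rightarrow> 'v set" where
  "wsp W par m n = {v \<in> car W. act W Dc v = scal W (fst par - of_int m) v
                              \<and> act W (J Ze 0) v = scal W (snd par + 2 * of_int n) v}"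

text \<open>The restricted dual, realised inside the algebraic dual: linear functionals on V
  (extended by 0 off the carrier) vanishing on all but finitely many V_{m,n}.\<close>
definition contra :: "'v umod \<Rightarrow> complex \<times> complex \<Rightarrow> ('v \<Rightarrow> complex) umod" where
  "contra W par =
    \<lparr> car = {\<phi>. (\<forall>v. v \<notin> car W \<longrightarrow> \<phi> v = 0)
               \<and> (\<forall>u\<in>car W. \<forall>v\<in>car W. \<phi> (addv W u v) = \<phi> u + \<phi> v)
               \<and> (\<forall>c. \<forall>v\<in>car W. \<phi> (scal W c v) = c * \<phi> v)
               \<and> finite {(m, n). \<exists>v\<in>wsp W par m n. \<phi> v \<noteq> 0}},
      addv = (\<lambda>\<phi> \<psi> v. \<phi> v + \<psi> v),
      scal = (\<lambda>c \<phi> v. c * \<phi> v),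
      act = (\<lambda>x \<phi> v. if v \<in> car W then
               (case x of J a n \<Rightarrow> - \<phi> (act W (J a (- n)) v)
                        | Kc \<Rightarrow> \<phi> (act W Kc v)
                        | Dc \<Rightarrow> \<phi> (act W Dc v))
             else 0) \<rparr>"

text \<open>j = - jj/2 with jj a natural number. sigma = True is D^+, False is D^-.
  act0 gives J^a |j,m> as a list of (coefficient, basis index).\<close>
definition act0_pm :: "bool \<Rightarrow> nat \<Rightarrow> sgn \<Rightarrow> nat \<Rightarrow> (complex \<times> nat) list" where
  "act0_pm \<sigma> jj a m =
     (if a = Ze then [((if \<sigma> then 2 else -2) * (of_nat m + of_nat jj / 2), m)]
      else if a = (if \<sigma> then Pl else Mi)
        then [(complex_of_real (sqrt (real ((m + 1) * (m + jj)))), m + 1)]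
      else (if m = 0 then [] else [(- complex_of_real (sqrt (real (m * (m - 1 + jj)))), m - 1)]))"

definition jval :: "nat \<Rightarrow> complex" where
  "jval jj = - of_nat jj / 2"

definition delta_pm :: "int \<Rightarrow> nat \<Rightarrow> complex" where
  "delta_pm k jj = - (jval jj * (jval jj + 1)) / (of_int k + 2)"

text \<open>Eigenvalues (delta0,q0) after spectral flow by t of a vector with eigenvalues par.\<close>
definition fpar :: "int \<Rightarrow> int \<Rightarrow> complex \<times> complex \<Rightarrow> complex \<times> complex" where
  "fpar k t par = (fst par + of_int t / 2 * snd par - (of_int t)^2 * of_int k / 4,
                   snd par - of_int t * of_int k)"

definition Dpm :: "bool \<Rightarrow> int \<Rightarrow> nat \<Rightarrow> int \<Rightarrow> nat fv set umod" where
  "Dpm \<sigma> k jj t = flow t (indmod (act0_pm \<sigma> jj) (delta_pm k jj) k)"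

definition par_pm :: "bool \<Rightarrow> int \<Rightarrow> nat \<Rightarrow> int \<Rightarrow> complex \<times> complex" where
  "par_pm \<sigma> k jj t = fpar k t (delta_pm k jj, (if \<sigma> then -2 else 2) * jval jj)"

definition D0 :: "int \<Rightarrow> int \<Rightarrow> unit fv set umod" where
  "D0 k t = flow t (indmod (\<lambda>_ _. []) 0 k)"

definition par0 :: "int \<Rightarrow> int \<Rightarrow> complex \<times> complex" where
  "par0 k t = fpar k t (0, 0)"

end

theory Submission
  imports Defs
begin

definition good :: "'v umod \<Rightarrow> complex \<Rightarrow> bool" where
  "good W \<kappa> \<longleftrightarrow>
     (\<forall>x\<in>car W. \<forall>y\<in>car W. addv W x y \<in> car W)
   \<and> (\<forall>c. \<forall>x\<in>car W. scal W c x \<in> car W)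
   \<and> (\<forall>g. \<forall>x\<in>car W. act W g x \<in> car W)
   \<and> (\<forall>a b. \<forall>v\<in>car W. scal W a (scal W b v) = scal W (a*b) v)
   \<and> (\<forall>a b. \<forall>v\<in>car W. addv W (scal W a v) (scal W b v) = scal W (a+b) v)
   \<and> (\<forall>u\<in>car W. \<forall>v\<in>car W. \<forall>a c. addv W u (scal W c v) = scal W a v \<longrightarrow> u = scal W (a - c) v)
   \<and> (\<forall>v\<in>car W. act W Kc v = scal W \<kappa> v)"

lemma flow_simps[simp]:
  "car (flow s W) = car W" "addv (flow s W) = addv W" "scal (flow s W) = scal W"
  "act (flow s W) Kc v = act W Kc v"
  "act (flow s W) (J Pl n) v = act W (J Pl (n - s)) v"
  "act (flow s W) (J Mi n) v = act W (J Mi (n + s)) v"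
  "act (flow s W) (J Ze 0) v = addv W (act W (J Ze 0) v) (scal W (- of_int s) (act W Kc v))"
  "n \<noteq> 0 \<Longrightarrow> act (flow s W) (J Ze n) v = act W (J Ze n) v"
  "act (flow s W) Dc v = addv W (act W Dc v)
               (addv W (scal W (of_int s / 2) (act W (J Ze 0) v))
                       (scal W (- ((of_int s)^2) / 4) (act W Kc v)))"
  by (simp_all add: flow_def)

lemma good_flow: assumes "good W \<kappa>" shows "good (flow t W) \<kappa>"
proof -
  have "\<forall>g. \<forall>x\<in>car W. act (flow t W) g x \<in> car W"
  proof (intro allI ballI)
    fix g x assume x: "x \<in> car W"
    show "act (flow t W) g x \<in> car W"
      using assms x unfolding good_def
      apply (cases g)
        apply (rename_tac a n, case_tac a)
          apply (auto simp: flow_def)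
      done
  qed
  then show ?thesis using assms unfolding good_def by simp
qed

lemma wsp_flow:
  assumes g: "good W (of_int k)"
  shows "wsp (flow s W) (fpar k s par) m n = wsp W par (m + s*n) n"
proof -
  let ?sc = "scal W" and ?ad = "addv W"
  obtain \<delta> q where par: "par = (\<delta>, q)" by (cases par)
  have sc2: "\<And>a b v. v \<in> car W \<Longrightarrow> ?sc a (?sc b v) = ?sc (a*b) v"
    and ad2: "\<And>a b v. v \<in> car W \<Longrightarrow> ?ad (?sc a v) (?sc b v) = ?sc (a+b) v"
    and canc: "\<And>u v a c. u \<in> car W \<Longrightarrow> v \<in> car W \<Longrightarrow> ?ad u (?sc c v) = ?sc a v \<Longrightarrow> u = ?sc (a - c) v"
    and K: "\<And>v. v \<in> car W \<Longrightarrow> act W Kc v = ?sc (of_int k) v"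
    and cla: "\<And>g v. v \<in> car W \<Longrightarrow> act W g v \<in> car W"
    and cls: "\<And>c v. v \<in> car W \<Longrightarrow> ?sc c v \<in> car W"
    using g unfolding good_def by blast+
  show ?thesis
  proof (rule set_eqI, rule iffI)
    fix v assume "v \<in> wsp (flow s W) (fpar k s par) m n"
    then have v: "v \<in> car W"
      and D: "?ad (act W Dc v) (?ad (?sc (of_int s / 2) (act W (J Ze 0) v))
                 (?sc (- ((of_int s)^2) / 4) (act W Kc v)))
             = ?sc (\<delta> + of_int s / 2 * q - (of_int s)^2 * of_int k / 4 - of_int m) v"
      and Z: "?ad (act W (J Ze 0) v) (?sc (- of_int s) (act W Kc v))
             = ?sc (q - of_int s * of_int k + 2 * of_int n) v"
      by (auto simp: wsp_def fpar_def par)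
    have Z': "?ad (act W (J Ze 0) v) (?sc (- of_int s * of_int k) v)
             = ?sc (q - of_int s * of_int k + 2 * of_int n) v"
      using Z by (simp add: K v sc2)
    have J0: "act W (J Ze 0) v = ?sc (q + 2 * of_int n) v"
      using canc[OF cla[OF v] v Z'] by (simp add: algebra_simps)
    have X: "?ad (?sc (of_int s / 2) (act W (J Ze 0) v))
                 (?sc (- ((of_int s)^2) / 4) (act W Kc v))
           = ?sc (of_int s / 2 * (q + 2 * of_int n) + - ((of_int s)^2) / 4 * of_int k) v"
      by (simp add: J0 K v sc2 ad2)
    have D': "act W Dc v = ?sc (\<delta> + of_int s / 2 * q - (of_int s)^2 * of_int k / 4 - of_int m
                 - (of_int s / 2 * (q + 2 * of_int n) + - ((of_int s)^2) / 4 * of_int k)) v"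
      using canc[OF cla[OF v] v] D X by metis
    have "\<delta> + of_int s / 2 * q - (of_int s)^2 * of_int k / 4 - of_int m
                 - (of_int s / 2 * (q + 2 * of_int n) + - ((of_int s)^2) / 4 * of_int k)
          = \<delta> - of_int (m + s * n)"
      by (simp add: field_simps power2_eq_square)
    note D'' = D'[unfolded this]
    show "v \<in> wsp W par (m + s*n) n"
      using D'' J0 v by (simp add: wsp_def par)
  next
    fix v assume "v \<in> wsp W par (m + s*n) n"
    then have v: "v \<in> car W" and D: "act W Dc v = ?sc (\<delta> - of_int (m + s*n)) v"
      and J0: "act W (J Ze 0) v = ?sc (q + 2 * of_int n) v"
      by (auto simp: wsp_def par)
    have Z: "?ad (act W (J Ze 0) v) (?sc (- of_int s) (act W Kc v))
             = ?sc (q - of_int s * of_int k + 2 * of_int n) v"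
      by (simp add: J0 K v sc2 ad2 algebra_simps)
    have X: "?ad (act W Dc v) (?ad (?sc (of_int s / 2) (act W (J Ze 0) v))
                 (?sc (- ((of_int s)^2) / 4) (act W Kc v)))
           = ?sc (\<delta> - of_int (m + s*n) + (of_int s / 2 * (q + 2 * of_int n) + - ((of_int s)^2) / 4 * of_int k)) v"
      by (simp add: J0 D K v sc2 ad2)
    have "\<delta> - of_int (m + s*n) + (of_int s / 2 * (q + 2 * of_int n) + - ((of_int s)^2) / 4 * of_int k)
        = \<delta> + of_int s / 2 * q - (of_int s)^2 * of_int k / 4 - of_int m"
      by (simp add: field_simps power2_eq_square)
    note X' = X[unfolded this]
    show "v \<in> wsp (flow s W) (fpar k s par) m n"
      using X' Z v unfolding wsp_def fpar_def par by simp
  qed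
qed


lemma fin_shift:
  fixes s :: int
  shows "finite {(m, n). P (m + s*n) n} \<longleftrightarrow> finite {(m, n). P m n}"
proof -
  have e: "{(m, n). P (m + s*n) n} = (\<lambda>(m,n). (m - s*n, n)) ` {(m, n). P m n}"
    by (auto simp: image_iff intro!: exI[where x="_ + s * _"])
  have "inj_on (\<lambda>(m::int,n). (m - s*n, n)) X" for X
    by (auto simp: inj_on_def)
  then show ?thesis unfolding e by (simp add: finite_image_iff)
qed

lemma contra_flow:
  assumes g: "good W (of_int k)"
  shows "mod_eq (contra (flow s W) (fpar k s par)) (flow (- s) (contra W par))"
proof -
  have cla: "\<And>g v. v \<in> car W \<Longrightarrow> act W g v \<in> car W"
    and cls: "\<And>c v. v \<in> car W \<Longrightarrow> scal W c v \<in> car W"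
    and cld: "\<And>u v. u \<in> car W \<Longrightarrow> v \<in> car W \<Longrightarrow> addv W u v \<in> car W"
    using g unfolding good_def by blast+
  have carq: "car (contra (flow s W) (fpar k s par)) = car (flow (- s) (contra W par))"
  proof -
    have fs: "\<And>\<phi>. finite {(m, n). \<exists>v\<in>wsp W par (m + s * n) n. \<phi> v \<noteq> 0} =
           finite {(m, n). \<exists>v\<in>wsp W par m n. \<phi> v \<noteq> 0}"
      by (rule fin_shift)
    show ?thesis unfolding contra_def by (simp add: wsp_flow[OF g] fs)
  qed
  have acts: "act (contra (flow s W) (fpar k s par)) x \<phi> = act (flow (- s) (contra W par)) x \<phi>"
    if phi: "\<phi> \<in> car (contra (flow s W) (fpar k s par))" for x \<phi>
  proof
    fix v
    have lin: "\<And>u w. u \<in> car W \<Longrightarrow> w \<in> car W \<Longrightarrow> \<phi> (addv W u w) = \<phi> u + \<phi> w"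
      and lins: "\<And>c w. w \<in> car W \<Longrightarrow> \<phi> (scal W c w) = c * \<phi> w"
      using phi by (auto simp: contra_def)
    show "act (contra (flow s W) (fpar k s par)) x \<phi> v = act (flow (- s) (contra W par)) x \<phi> v"
    proof (cases "v \<in> car W")
      case False then show ?thesis
        by (cases x) (auto simp: contra_def flow_def split: sgn.split)
    next
      case v: True
      show ?thesis
      proof (cases x)
        case (J a n)
        then show ?thesis
        proof (cases a)
          case Ze
          show ?thesis
          proof (cases "n = 0")
            case True
            then show ?thesis using J Ze v
              by (simp add: contra_def flow_def lin lins cla cls)
          next
            case False
            then show ?thesis using J Ze v
              by (simp add: contra_def flow_def)
          qed
        qed (use J v in \<open>auto simp: contra_def flow_def algebra_simps\<close>)
      next
        case Kc then show ?thesis using v by (simp add: contra_def flow_def)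
      next
        case Dc then show ?thesis using v
          by (simp add: contra_def flow_def lin lins cla cls cld power2_eq_square
              algebra_simps)
      qed
    qed
  qed
  show ?thesis unfolding mod_eq_def
    using carq acts by (simp add: contra_def flow_def)
qed


lemma span_lin:
  assumes "x \<in> spanR R" "y \<in> spanR R"
  shows "(\<lambda>p. a * x p + y p) \<in> spanR R"
  using assms(1)
proof (induction x)
  case zero then show ?case using assms(2) by simp
next
  case (step r n c)
  have "(\<lambda>p. (a*c) * r p + (\<lambda>p. a * n p + y p) p) \<in> spanR R"
    by (rule spanR.step[OF step.hyps(1) step.IH])
  then have "(\<lambda>p. (a*c) * r p + (a * n p + y p)) \<in> spanR R" by simp
  moreover have "(\<lambda>p. a * (c * r p + n p) + y p) = (\<lambda>p. (a*c) * r p + (a * n p + y p))"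
    by (simp add: algebra_simps)
  ultimately show ?case by simp
qed

lemma span_comb:
  assumes "x \<in> spanR R" "y \<in> spanR R" "\<And>p. z p = a * x p + b * y p"
  shows "z \<in> spanR R"
proof -
  have "(\<lambda>p. b * y p + (\<lambda>p. 0) p) \<in> spanR R" by (rule span_lin[OF assms(2) spanR.zero])
  then have "(\<lambda>p. a * x p + (\<lambda>p. b * y p + 0) p) \<in> spanR R" by (intro span_lin[OF assms(1)]) simp
  moreover have "z = (\<lambda>p. a * x p + (\<lambda>p. b * y p + 0) p)" using assms(3) by auto
  ultimately show ?thesis by simp
qed

lemma span_gen: assumes "r \<in> R" shows "r \<in> spanR R"
proof -
  have "(\<lambda>p. 1 * r p + (\<lambda>p. 0) p) \<in> spanR R" by (rule spanR.step[OF assms spanR.zero])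
  then show ?thesis by simp
qed

lemma span_zero': "(\<And>p. z p = 0) \<Longrightarrow> z \<in> spanR R"
  using spanR.zero by (metis ext)

lemma FV_lin: "f \<in> FV \<Longrightarrow> g \<in> FV \<Longrightarrow> (\<lambda>p. a * f p + b * g p) \<in> FV"
proof -
  assume "f \<in> FV" "g \<in> FV"
  then have "finite ({p. f p \<noteq> 0} \<union> {p. g p \<noteq> 0})" by (simp add: FV_def)
  then show ?thesis unfolding FV_def mem_Collect_eq by (rule finite_subset[rotated]) auto
qed

lemma FV_add: "f \<in> FV \<Longrightarrow> g \<in> FV \<Longrightarrow> (\<lambda>p. f p + g p) \<in> FV"
  using FV_lin[of f g 1 1] by simp

lemma FV_scal: "f \<in> FV \<Longrightarrow> (\<lambda>p. c * f p) \<in> FV"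
  using FV_lin[of f f c 0] by simp

lemma FV_prep: "f \<in> FV \<Longrightarrow> prep x f \<in> FV"
proof -
  assume f: "f \<in> FV"
  have "{p. prep x f p \<noteq> 0} \<subseteq> (\<lambda>(w, b). (x # w, b)) ` {p. f p \<noteq> 0}"
  proof
    fix p assume "p \<in> {p. prep x f p \<noteq> 0}"
    then obtain w b where p: "p = (w, b)" and nz: "prep x f (w, b) \<noteq> 0" by (cases p) auto
    then obtain w' where "w = x # w'" "f (w', b) \<noteq> 0"
      by (cases w) (auto simp: prep_def split: if_splits)
    then show "p \<in> (\<lambda>(w, b). (x # w, b)) ` {p. f p \<noteq> 0}" using p by force
  qed
  moreover have "finite ((\<lambda>(w, b). (x # w, b)) ` {p. f p \<noteq> 0})" using f by (simp add: FV_def)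
  ultimately show ?thesis unfolding FV_def mem_Collect_eq by (rule finite_subset)
qed

lemma qcls_self: "f \<in> FV \<Longrightarrow> f \<in> qcls (spanR R) f"
  unfolding qcls_def by (auto intro: span_zero')

lemma qcls_eq: "f \<in> FV \<Longrightarrow> g \<in> FV \<Longrightarrow> (\<lambda>p. f p - g p) \<in> spanR R \<Longrightarrow> qcls (spanR R) f = qcls (spanR R) g"
proof -
  assume d: "(\<lambda>p. f p - g p) \<in> spanR R"
  show ?thesis unfolding qcls_def
  proof (intro Collect_cong conj_cong refl iffI)
    fix h assume "(\<lambda>p. f p - h p) \<in> spanR R"
    then show "(\<lambda>p. g p - h p) \<in> spanR R" by (rule span_comb[OF _ d, where a=1 and b="-1"]) simp
  next
    fix h assume "(\<lambda>p. g p - h p) \<in> spanR R"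
    then show "(\<lambda>p. f p - h p) \<in> spanR R" by (rule span_comb[OF _ d, where a=1 and b=1]) simp
  qed
qed

lemma qcls_eqD: "f \<in> FV \<Longrightarrow> g \<in> FV \<Longrightarrow> qcls (spanR R) f = qcls (spanR R) g \<Longrightarrow> (\<lambda>p. f p - g p) \<in> spanR R"
proof -
  assume f: "f \<in> FV" and g: "g \<in> FV" and e: "qcls (spanR R) f = qcls (spanR R) g"
  have "f \<in> qcls (spanR R) g" using qcls_self[OF f] e by metis
  then have "(\<lambda>p. g p - f p) \<in> spanR R" by (simp add: qcls_def)
  then show ?thesis by (rule span_comb[OF _ spanR.zero, where a="-1" and b=0]) simp
qed

lemma rep_qcls: assumes f: "f \<in> FV"
  shows "rep (qcls (spanR R) f) \<in> FV" "(\<lambda>p. rep (qcls (spanR R) f) p - f p) \<in> spanR R"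
proof -
  have "rep (qcls (spanR R) f) \<in> qcls (spanR R) f"
    unfolding rep_def using qcls_self[OF f, of R] by (metis someI)
  then have "rep (qcls (spanR R) f) \<in> FV" "(\<lambda>p. f p - rep (qcls (spanR R) f) p) \<in> spanR R"
    by (auto simp: qcls_def)
  then show "rep (qcls (spanR R) f) \<in> FV" "(\<lambda>p. rep (qcls (spanR R) f) p - f p) \<in> spanR R"
    by (auto intro: span_comb[OF _ spanR.zero, where a="-1" and b=0])
qed


lemma prep_diff: "prep x (\<lambda>p. f p - g p) = (\<lambda>p. prep x f p - prep x g p)"
  by (auto simp: prep_def fun_eq_iff split: list.split)

lemma prep_comb: "prep x (\<lambda>p. c * f p + g p) = (\<lambda>p. c * prep x f p + prep x g p)"
  by (auto simp: prep_def fun_eq_iff split: list.split)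

lemma prep_zero: "prep x (\<lambda>p. 0) = (\<lambda>p. 0)"
  by (auto simp: prep_def fun_eq_iff split: list.split)

lemma prep_ev: "prep x (ev w b) = ev (x # w) b"
  by (auto simp: prep_def ev_def fun_eq_iff split: list.split)

lemma sum_list_zero_pairs[simp]: "(\<Sum>(c, z)\<leftarrow>L. (0::complex)) = 0"
  by (induction L) auto

lemma prep_lincomb: "prep x (lincomb L F) = lincomb L (\<lambda>z. prep x (F z))"
  by (induction L) (auto simp: lincomb_def prep_def fun_eq_iff split: list.split)

lemma prep_lincomb_ev: "prep x (lincomb L (\<lambda>z. ev (w z) (b z))) = lincomb L (\<lambda>z. ev (x # w z) (b z))"
  by (simp add: prep_lincomb prep_ev)

lemma prep_rels:
  assumes "r \<in> rels a \<delta> k" shows "prep x r \<in> rels a \<delta> k"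
proof -
  have c1: "(\<lambda>p. ev (w @ [x1, y] @ w') b p - ev (w @ [y, x1] @ w') b p
            - lincomb (brk x1 y) (\<lambda>z. ev (w @ [z] @ w') b) p) \<in> rels a \<delta> k" for w x1 y w' b
    unfolding rels_def by blast
  have c2: "(\<lambda>p. ev (w @ [J a' 0]) b p - lincomb (a a' b) (\<lambda>b'. ev w b') p) \<in> rels a \<delta> k" for w a' b
    unfolding rels_def by blast
  have c3: "(\<lambda>p. ev (w @ [Kc]) b p - of_int k * ev w b p) \<in> rels a \<delta> k" for w b
    unfolding rels_def by blast
  have c4: "(\<lambda>p. ev (w @ [Dc]) b p - \<delta> * ev w b p) \<in> rels a \<delta> k" for w b
    unfolding rels_def by blast
  have c5: "n \<ge> 1 \<Longrightarrow> ev (w @ [J a' n]) b \<in> rels a \<delta> k" for w a' n b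
    unfolding rels_def by blast
  have pc: "prep x (\<lambda>p. c * f p) = (\<lambda>p. c * prep x f p)" for c f
    using prep_comb[of x c f "\<lambda>p. 0"] by (simp add: prep_zero)
  from assms[unfolded rels_def] show ?thesis
    apply (elim UnE CollectE exE conjE)
    subgoal for w x1 y w' b
      using c1[of "x # w" x1 y w' b] by (simp add: prep_diff prep_ev prep_lincomb_ev)
    subgoal for w a' b
      using c2[of "x # w" a' b] by (simp add: prep_diff prep_ev prep_lincomb_ev)
    subgoal for w b
      using c3[of "x # w" b] by (simp add: prep_diff prep_ev pc)
    subgoal for w b
      using c4[of "x # w" b] by (simp add: prep_diff prep_ev pc)
    subgoal for w a' n b
      using c5[of n "x # w" a' b] by (simp add: prep_ev)
    done
qed

lemma prep_span: "f \<in> spanR (rels a \<delta> k) \<Longrightarrow> prep x f \<in> spanR (rels a \<delta> k)"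
proof (induction f rule: spanR.induct)
  case zero then show ?case by (simp add: prep_zero spanR.zero)
next
  case (step r n c) then show ?case
    by (simp add: prep_comb spanR.step prep_rels)
qed


lemma rel_in_span:
  "(\<lambda>p. ev (w @ [x1, y] @ w') b p - ev (w @ [y, x1] @ w') b p
            - lincomb (brk x1 y) (\<lambda>z. ev (w @ [z] @ w') b) p) \<in> spanR (rels a \<delta> k)"
  "(\<lambda>p. ev (w @ [Kc]) b p - of_int k * ev w b p) \<in> spanR (rels a \<delta> k)"
  proof -
  show "(\<lambda>p. ev (w @ [x1, y] @ w') b p - ev (w @ [y, x1] @ w') b p
            - lincomb (brk x1 y) (\<lambda>z. ev (w @ [z] @ w') b) p) \<in> spanR (rels a \<delta> k)"
    by (rule span_gen) (unfold rels_def, blast)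
  show "(\<lambda>p. ev (w @ [Kc]) b p - of_int k * ev w b p) \<in> spanR (rels a \<delta> k)"
    by (rule span_gen) (unfold rels_def, blast)
qed

lemma brk_Kc: "brk Kc y = []" by (cases y) simp_all

lemma Kc_commute: "(\<lambda>p. ev (u @ [Kc] @ w) b p - ev (u @ w @ [Kc]) b p) \<in> spanR (rels a \<delta> k)"
proof (induction w arbitrary: u)
  case Nil then show ?case by (intro span_zero') simp
next
  case (Cons y w)
  have A: "(\<lambda>p. ev (u @ [Kc, y] @ w) b p - ev (u @ [y, Kc] @ w) b p) \<in> spanR (rels a \<delta> k)"
    using rel_in_span(1)[of u Kc y w b a \<delta> k] by (simp add: brk_Kc lincomb_def)
  show ?case
    by (rule span_comb[OF A Cons[of "u @ [y]"], where a=1 and b=1]) simp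
qed

lemma Kc_ev: "(\<lambda>p. prep Kc (ev w b) p - of_int k * ev w b p) \<in> spanR (rels a \<delta> k)"
  using span_comb[OF Kc_commute[of "[]" w b a \<delta> k] rel_in_span(2)[of w b k a \<delta>], where a=1 and b=1]
  by (simp add: prep_ev)

lemma FV_induct:
  assumes "finite S" "{p. f p \<noteq> 0} \<subseteq> S"
    and zero: "Q (\<lambda>p. 0)"
    and step: "\<And>c w b g. Q g \<Longrightarrow> Q (\<lambda>p. c * ev w b p + g p)"
  shows "Q f"
  using assms(1,2)
proof (induction S arbitrary: f rule: finite_induct)
  case empty
  then have "f = (\<lambda>p. 0)" by auto
  then show ?case using zero by simp
next
  case (insert q S)
  let ?g = "f(q := 0)"
  have "{p. ?g p \<noteq> 0} \<subseteq> S" using insert.prems by auto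
  then have "Q ?g" by (rule insert.IH)
  then have "Q (\<lambda>p. f q * ev (fst q) (snd q) p + ?g p)" by (rule step)
  moreover have "(\<lambda>p. f q * ev (fst q) (snd q) p + ?g p) = f"
    by (auto simp: ev_def fun_eq_iff)
  ultimately show ?case by simp
qed

lemma Kc_FV:
  assumes "f \<in> FV"
  shows "(\<lambda>p. prep Kc f p - of_int k * f p) \<in> spanR (rels a \<delta> k)"
proof -
  have fin: "finite {p. f p \<noteq> 0}" using assms by (simp add: FV_def)
  show ?thesis
  proof (rule FV_induct[OF fin subset_refl, where Q="\<lambda>f. (\<lambda>p. prep Kc f p - of_int k * f p) \<in> spanR (rels a \<delta> k)"])
    show "(\<lambda>p. prep Kc (\<lambda>p. 0) p - of_int k * 0) \<in> spanR (rels a \<delta> k)"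
      by (intro span_zero') (simp add: prep_zero)
  next
    fix c w b g
    assume g: "(\<lambda>p. prep Kc g p - of_int k * g p) \<in> spanR (rels a \<delta> k)"
    show "(\<lambda>p. prep Kc (\<lambda>p. c * ev w b p + g p) p - of_int k * (c * ev w b p + g p)) \<in> spanR (rels a \<delta> k)"
      by (rule span_comb[OF Kc_ev[of w b k a \<delta>] g, where a=c and b=1])
         (simp only: prep_comb, simp add: algebra_simps)
  qed
qed


lemma indmod_simps:
  "car (indmod a \<delta> k) = {qcls (spanR (rels a \<delta> k)) f | f. f \<in> FV}"
  "addv (indmod a \<delta> k) C D = qcls (spanR (rels a \<delta> k)) (\<lambda>p. rep C p + rep D p)"
  "scal (indmod a \<delta> k) c C = qcls (spanR (rels a \<delta> k)) (\<lambda>p. c * rep C p)"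
  "act (indmod a \<delta> k) x C = qcls (spanR (rels a \<delta> k)) (prep x (rep C))"
  by (simp_all add: indmod_def Let_def)

lemma car_rep:
  assumes "C \<in> car (indmod a \<delta> k)"
  shows "rep C \<in> FV" "qcls (spanR (rels a \<delta> k)) (rep C) = C"
proof -
  obtain f where f: "f \<in> FV" and C: "C = qcls (spanR (rels a \<delta> k)) f"
    using assms by (auto simp: indmod_simps)
  show "rep C \<in> FV" using rep_qcls(1)[OF f] C by simp
  show "qcls (spanR (rels a \<delta> k)) (rep C) = C"
    using qcls_eq[OF rep_qcls(1)[OF f] f rep_qcls(2)[OF f]] C by simp
qed

lemma in_car: "f \<in> FV \<Longrightarrow> qcls (spanR (rels a \<delta> k)) f \<in> car (indmod a \<delta> k)"
  by (auto simp: indmod_simps)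

lemma good_indmod: "good (indmod a \<delta> k) (of_int k)"
proof -
  let ?N = "spanR (rels a \<delta> k)" and ?I = "indmod a \<delta> k"
  have c1: "\<forall>x\<in>car ?I. \<forall>y\<in>car ?I. addv ?I x y \<in> car ?I"
    by (auto simp: indmod_simps(2) intro!: in_car FV_add car_rep)
  have c2: "\<forall>c. \<forall>x\<in>car ?I. scal ?I c x \<in> car ?I"
    by (auto simp: indmod_simps(3) intro!: in_car FV_scal car_rep)
  have c3: "\<forall>g. \<forall>x\<in>car ?I. act ?I g x \<in> car ?I"
    by (auto simp: indmod_simps(4) intro!: in_car FV_prep car_rep)
  have l1: "\<forall>a b. \<forall>v\<in>car ?I. scal ?I a (scal ?I b v) = scal ?I (a*b) v"
  proof (intro allI ballI)
    fix x y v assume v: "v \<in> car ?I"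
    have f: "rep v \<in> FV" by (rule car_rep[OF v])
    have bf: "(\<lambda>p. y * rep v p) \<in> FV" by (rule FV_scal[OF f])
    show "scal ?I x (scal ?I y v) = scal ?I (x*y) v"
      unfolding indmod_simps(3)
      by (rule qcls_eq[OF FV_scal[OF rep_qcls(1)[OF bf]] FV_scal[OF f]],
          rule span_comb[OF rep_qcls(2)[OF bf] spanR.zero, where a=x and b=0])
         (simp add: algebra_simps)
  qed
  have l2: "\<forall>a b. \<forall>v\<in>car ?I. addv ?I (scal ?I a v) (scal ?I b v) = scal ?I (a+b) v"
  proof (intro allI ballI)
    fix x y v assume v: "v \<in> car ?I"
    have f: "rep v \<in> FV" by (rule car_rep[OF v])
    have af: "(\<lambda>p. x * rep v p) \<in> FV" by (rule FV_scal[OF f])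
    have bf: "(\<lambda>p. y * rep v p) \<in> FV" by (rule FV_scal[OF f])
    show "addv ?I (scal ?I x v) (scal ?I y v) = scal ?I (x+y) v"
      unfolding indmod_simps(2,3)
      by (rule qcls_eq[OF FV_add[OF rep_qcls(1)[OF af] rep_qcls(1)[OF bf]] FV_scal[OF f]],
          rule span_comb[OF rep_qcls(2)[OF af] rep_qcls(2)[OF bf], where a=1 and b=1])
         (simp add: algebra_simps)
  qed
  have l3: "\<forall>u\<in>car ?I. \<forall>v\<in>car ?I. \<forall>a c. addv ?I u (scal ?I c v) = scal ?I a v \<longrightarrow> u = scal ?I (a - c) v"
  proof (intro allI ballI impI)
    fix u v x c assume u: "u \<in> car ?I" and v: "v \<in> car ?I"
      and e: "addv ?I u (scal ?I c v) = scal ?I x v"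
    have f: "rep u \<in> FV" by (rule car_rep[OF u])
    have g: "rep v \<in> FV" by (rule car_rep[OF v])
    have cg: "(\<lambda>p. c * rep v p) \<in> FV" by (rule FV_scal[OF g])
    let ?h = "rep (qcls ?N (\<lambda>p. c * rep v p))"
    have e': "qcls ?N (\<lambda>p. rep u p + ?h p) = qcls ?N (\<lambda>p. x * rep v p)"
      using e unfolding indmod_simps(2,3) .
    have d: "(\<lambda>p. (rep u p + ?h p) - x * rep v p) \<in> ?N"
      using qcls_eqD[OF FV_add[OF f rep_qcls(1)[OF cg]] FV_scal[OF g] e'] .
    have "qcls ?N (rep u) = qcls ?N (\<lambda>p. (x - c) * rep v p)"
      by (rule qcls_eq[OF f FV_scal[OF g]],
          rule span_comb[OF d rep_qcls(2)[OF cg], where a=1 and b="-1"])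
         (simp add: algebra_simps)
    then show "u = scal ?I (x - c) v"
      unfolding indmod_simps(3) car_rep(2)[OF u] .
  qed
  have l4: "\<forall>v\<in>car ?I. act ?I Kc v = scal ?I (of_int k) v"
  proof
    fix v assume v: "v \<in> car ?I"
    have f: "rep v \<in> FV" by (rule car_rep[OF v])
    show "act ?I Kc v = scal ?I (of_int k) v"
      unfolding indmod_simps(3,4)
      by (rule qcls_eq[OF FV_prep[OF f] FV_scal[OF f] Kc_FV[OF f]])
  qed
  show ?thesis unfolding good_def using c1 c2 c3 l1 l2 l3 l4 by blast
qed

theorem lemma3p15:
  fixes k t s :: int and jj :: nat and \<sigma> :: bool
  assumes "k < -2"
  shows "mod_eq (contra (flow s (Dpm \<sigma> k jj t)) (par_pm \<sigma> k jj (t + s)))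
                (flow (- s) (contra (Dpm \<sigma> k jj t) (par_pm \<sigma> k jj t)))
       \<and> mod_eq (contra (flow s (D0 k t)) (par0 k (t + s)))
                (flow (- s) (contra (D0 k t) (par0 k t)))"
proof
  have p1: "par_pm \<sigma> k jj (t + s) = fpar k s (par_pm \<sigma> k jj t)"
    unfolding par_pm_def by (simp add: fpar_def power2_eq_square field_simps)
  have p2: "par0 k (t + s) = fpar k s (par0 k t)"
    unfolding par0_def by (simp add: fpar_def power2_eq_square field_simps)
  show "mod_eq (contra (flow s (Dpm \<sigma> k jj t)) (par_pm \<sigma> k jj (t + s)))
                (flow (- s) (contra (Dpm \<sigma> k jj t) (par_pm \<sigma> k jj t)))"
    unfolding p1 Dpm_def by (rule contra_flow[OF good_flow[OF good_indmod]])
  show "mod_eq (contra (flow s (D0 k t)) (par0 k (t + s)))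
                (flow (- s) (contra (D0 k t) (par0 k t)))"
    unfolding p2 D0_def by (rule contra_flow[OF good_flow[OF good_indmod]])
qed

end
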